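(* Let $J^r:\mathbb{R}^n\to\mathbb{R}^k$ be twice continuously differentiable and $\epsilon\in[0,\infty)^k$. Let $\bar u\in\varphi^{-1}(0)$ be such that problem $(\mathrm{P}_u)$ with $u=\bar u$ has a unique solution $\bar\alpha\in\Delta_k$ and $\bar\alpha_i>0$ for all $i\in\{1,\dots,k\}$, and suppose that $(\mathrm{P}_u)$ is uniquely solvable for all $u$ in a neighborhood of $\bar u$. Then there is an open set $U\subseteq\mathbb{R}^n$ with $\bar u\in U$ such that $\varphi|_U$ is continuously differentiable.
   Context: $\Delta_k:=\{\alpha\in[0,\infty)^k:\sum_{i=1}^k\alpha_i=1\}$. $DJ^r(u)\in\mathbb{R}^{k\times n}$ is the Jacobian of $J^r$. For $u\in\mathbb{R}^n$ let $\omega_u(\alpha):=\|DJ^r(u)^\top\alpha\|_2^2-(\alpha^\top\epsilon)^2=\alpha^\top\big(DJ^r(u)DJ^r(u)^\top-\epsilon\epsilon^\top\big)\alpha$, and let $(\mathrm{P}_u)$ denote the problem $\min_{\alpha\in\Delta_k}\omega_u(\alpha)$ (a "solution" is a minimizer). Define $\varphi:\mathbb{R}^n\to\mathbb{R}$, $\varphi(u):=\min_{\alpha\in\Delta_k}\omega_u(\alpha)$. *)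

theory Defs
  imports "HOL-Analysis.Analysis"
begin

definition unit_simplex :: "(real ^ 'k) set" where
  "unit_simplex = {\<alpha>. (\<forall>i. 0 \<le> \<alpha> $ i) \<and> (\<Sum>i\<in>UNIV. \<alpha> $ i) = 1}"

definition omega :: "(real ^ 'n \<Rightarrow> real ^ 'n ^ 'k) \<Rightarrow> real ^ 'k \<Rightarrow> real ^ 'n \<Rightarrow> real ^ 'k \<Rightarrow> real" where
  "omega DJ \<epsilon> u \<alpha> = (norm (transpose (DJ u) *v \<alpha>))\<^sup>2 - (\<alpha> \<bullet> \<epsilon>)\<^sup>2"

definition solves_P :: "(real ^ 'n \<Rightarrow> real ^ 'n ^ 'k) \<Rightarrow> real ^ 'k \<Rightarrow> real ^ 'n \<Rightarrow> real ^ 'k \<Rightarrow> bool" where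
  "solves_P DJ \<epsilon> u \<alpha> \<longleftrightarrow> \<alpha> \<in> unit_simplex \<and> (\<forall>\<beta>\<in>unit_simplex. omega DJ \<epsilon> u \<alpha> \<le> omega DJ \<epsilon> u \<beta>)"

text \<open>phi(u) = min over the unit_simplex of omega_u (the minimum exists by compactness).\<close>
definition phi :: "(real ^ 'n \<Rightarrow> real ^ 'n ^ 'k) \<Rightarrow> real ^ 'k \<Rightarrow> real ^ 'n \<Rightarrow> real" where
  "phi DJ \<epsilon> u = (INF \<alpha>\<in>unit_simplex. omega DJ \<epsilon> u \<alpha>)"

definition C2_with_jacobian :: "(real ^ 'n \<Rightarrow> real ^ 'k) \<Rightarrow> (real ^ 'n \<Rightarrow> real ^ 'n ^ 'k) \<Rightarrow> bool" where
  "C2_with_jacobian J DJ \<longleftrightarrow>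
     (\<forall>u. (J has_derivative (\<lambda>h. DJ u *v h)) (at u)) \<and>
     (\<exists>D2. (\<forall>u. (DJ has_derivative blinfun_apply (D2 u)) (at u)) \<and> continuous_on UNIV D2)"

end

theory Submission imports Defs begin

lemma tmv_eq: "transpose (M::real^'n^'k) *v b = (\<chi> j. \<Sum>i\<in>UNIV. M $ i $ j * b $ i)"
  by (simp add: matrix_vector_mult_def transpose_def vec_eq_iff mult.commute)

lemma lin_tm: "linear (\<lambda>M::real^'n^'k. transpose M *v b)"
  by (rule linearI; unfold tmv_eq; simp add: vec_eq_iff sum.distrib algebra_simps sum_distrib_left)

lemma bl_tm: "bounded_linear (\<lambda>M::real^'n^'k. transpose M *v b)"
  using lin_tm linear_conv_bounded_linear by blast

lemma cont_tmv:
  fixes M :: "'a::topological_space \<Rightarrow> real^'n^'k" and b :: "'a \<Rightarrow> real^'k"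
  assumes "continuous_on S M" "continuous_on S b"
  shows "continuous_on S (\<lambda>p. transpose (M p) *v b p)"
  unfolding tmv_eq using assms by (intro continuous_intros) auto

definition Lb :: "(real^'n \<Rightarrow> real^'n^'k) \<Rightarrow> (real^'n \<Rightarrow> ((real^'n) \<Rightarrow>\<^sub>L (real^'n^'k))) \<Rightarrow> real^'n \<Rightarrow> real^'k \<Rightarrow> ((real^'n) \<Rightarrow>\<^sub>L real)" where
  "Lb DJ D2 x \<beta> = Blinfun (\<lambda>h. 2 * ((transpose (DJ x) *v \<beta>) \<bullet> (transpose (blinfun_apply (D2 x) h) *v \<beta>)))"

lemma Lb_bl:
  fixes DJ :: "real^'n \<Rightarrow> real^'n^'k" and D2 :: "real^'n \<Rightarrow> ((real^'n) \<Rightarrow>\<^sub>L (real^'n^'k))"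
  shows "bounded_linear (\<lambda>h. 2 * ((transpose (DJ x) *v \<beta>) \<bullet> (transpose (blinfun_apply (D2 x) h) *v \<beta>)))"
proof -
  have a: "bounded_linear (\<lambda>h. transpose (blinfun_apply (D2 x) h) *v \<beta>)"
    using bounded_linear_compose[OF bl_tm[of \<beta>] blinfun.bounded_linear_right[of "D2 x"]] by simp
  have b: "bounded_linear (\<lambda>h. (transpose (DJ x) *v \<beta>) \<bullet> (transpose (blinfun_apply (D2 x) h) *v \<beta>))"
    by (rule bounded_linear_compose[OF bounded_linear_inner_right a])
  show ?thesis by (rule bounded_linear_compose[OF bounded_linear_mult_right b])
qed

lemma Lb_apply:
  fixes DJ :: "real^'n \<Rightarrow> real^'n^'k" and D2 :: "real^'n \<Rightarrow> ((real^'n) \<Rightarrow>\<^sub>L (real^'n^'k))"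
  shows "blinfun_apply (Lb DJ D2 x \<beta>) h = 2 * ((transpose (DJ x) *v \<beta>) \<bullet> (transpose (blinfun_apply (D2 x) h) *v \<beta>))"
  unfolding Lb_def by (subst bounded_linear_Blinfun_apply[OF Lb_bl]) (rule refl)

lemma deriv_omega:
  fixes DJ :: "real^'n \<Rightarrow> real^'n^'k" and D2 :: "real^'n \<Rightarrow> ((real^'n) \<Rightarrow>\<^sub>L (real^'n^'k))"

  assumes "(DJ has_derivative blinfun_apply (D2 x)) (at x)"
  shows "((\<lambda>y. omega DJ \<epsilon> y \<beta>) has_derivative blinfun_apply (Lb DJ D2 x \<beta>)) (at x)"
proof -
  have w: "((\<lambda>y. transpose (DJ y) *v \<beta>) has_derivative (\<lambda>h. transpose (blinfun_apply (D2 x) h) *v \<beta>)) (at x)"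
    using bounded_linear.has_derivative[OF bl_tm assms] .
  have "((\<lambda>y. (transpose (DJ y) *v \<beta>) \<bullet> (transpose (DJ y) *v \<beta>) - (\<beta> \<bullet> \<epsilon>)\<^sup>2) has_derivative
     (\<lambda>h. (transpose (DJ x) *v \<beta>) \<bullet> (transpose (blinfun_apply (D2 x) h) *v \<beta>) + (transpose (blinfun_apply (D2 x) h) *v \<beta>) \<bullet> (transpose (DJ x) *v \<beta>) - 0)) (at x)"
    by (intro has_derivative_diff has_derivative_inner w has_derivative_const)
  moreover have "(\<lambda>h. (transpose (DJ x) *v \<beta>) \<bullet> (transpose (blinfun_apply (D2 x) h) *v \<beta>) + (transpose (blinfun_apply (D2 x) h) *v \<beta>) \<bullet> (transpose (DJ x) *v \<beta>) - 0) = blinfun_apply (Lb DJ D2 x \<beta>)"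
    by (rule ext) (simp add: Lb_apply inner_commute)
  moreover have "(\<lambda>y. (transpose (DJ y) *v \<beta>) \<bullet> (transpose (DJ y) *v \<beta>) - (\<beta> \<bullet> \<epsilon>)\<^sup>2) = (\<lambda>y. omega DJ \<epsilon> y \<beta>)"
    by (rule ext) (simp add: omega_def power2_norm_eq_inner)
  ultimately show ?thesis by simp
qed

lemma cont_Lb:
  fixes DJ :: "real^'n \<Rightarrow> real^'n^'k" and D2 :: "real^'n \<Rightarrow> ((real^'n) \<Rightarrow>\<^sub>L (real^'n^'k))"

  assumes "continuous_on UNIV D2" "continuous_on UNIV DJ"
  shows "continuous_on UNIV (\<lambda>p. Lb DJ D2 (fst p) (snd p))"
proof (rule continuous_on_blinfun_componentwise)
  fix i :: "real^'n"
  have c1: "continuous_on UNIV (\<lambda>p::(real^'n) \<times> (real^'k). DJ (fst p))"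
    by (rule continuous_on_compose2[OF assms(2)]) (auto intro: continuous_intros)
  have c2: "continuous_on UNIV (\<lambda>p::(real^'n) \<times> (real^'k). blinfun_apply (D2 (fst p)) i)"
    by (intro continuous_intros continuous_on_compose2[OF assms(1)]) auto
  show "continuous_on UNIV (\<lambda>p. blinfun_apply (Lb DJ D2 (fst p) (snd p)) i)"
    unfolding Lb_apply
    by (intro continuous_intros cont_tmv c1 c2)
qed

lemma cont_omega:
  fixes DJ :: "real^'n \<Rightarrow> real^'n^'k" and D2 :: "real^'n \<Rightarrow> ((real^'n) \<Rightarrow>\<^sub>L (real^'n^'k))"

  assumes "continuous_on UNIV DJ"
  shows "continuous_on UNIV (\<lambda>p. omega DJ \<epsilon> (fst p) (snd p))"
proof -
  have c1: "continuous_on UNIV (\<lambda>p::(real^'n) \<times> (real^'k). DJ (fst p))"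
    by (rule continuous_on_compose2[OF assms]) (auto intro: continuous_intros)
  show ?thesis unfolding omega_def
    by (intro continuous_intros cont_tmv c1)
qed

lemma compact_simplex: "compact (unit_simplex :: (real^'k) set)"
proof (subst compact_eq_bounded_closed, rule conjI)
  show "bounded (unit_simplex :: (real^'k) set)"
    unfolding bounded_iff
  proof (intro exI ballI)
    fix x :: "real^'k" assume "x \<in> unit_simplex"
    then show "norm x \<le> 1" using norm_le_l1_cart[of x] by (simp add: unit_simplex_def)
  qed
  have "unit_simplex = (\<Inter>i. {x::real^'k. 0 \<le> x $ i}) \<inter> {x. (\<Sum>i\<in>UNIV. x $ i) = 1}"
    by (auto simp: unit_simplex_def)
  moreover have "closed \<dots>"
    by (intro closed_Int closed_INT ballI closed_Collect_le closed_Collect_eq continuous_intros)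
  ultimately show "closed (unit_simplex :: (real^'k) set)" by simp
qed

theorem mainTheorem5:
  fixes J :: "real ^ 'n \<Rightarrow> real ^ 'k"
    and DJ :: "real ^ 'n \<Rightarrow> real ^ 'n ^ 'k"
    and \<epsilon> :: "real ^ 'k"
    and ubar :: "real ^ 'n"
    and \<alpha>bar :: "real ^ 'k"
  assumes C2: "C2_with_jacobian J DJ"
    and eps_nonneg: "\<forall>i. 0 \<le> \<epsilon> $ i"
    and phi_zero: "phi DJ \<epsilon> ubar = 0"
    and sol: "solves_P DJ \<epsilon> ubar \<alpha>bar"
    and uniq: "\<forall>\<alpha>. solves_P DJ \<epsilon> ubar \<alpha> \<longrightarrow> \<alpha> = \<alpha>bar"
    and pos: "\<forall>i. 0 < \<alpha>bar $ i"
    and nbhd: "\<exists>V. open V \<and> ubar \<in> V \<and> (\<forall>u\<in>V. \<exists>!\<alpha>. solves_P DJ \<epsilon> u \<alpha>)"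
  shows "\<exists>U. open U \<and> ubar \<in> U \<and>
           (\<exists>D :: real ^ 'n \<Rightarrow> ((real ^ 'n) \<Rightarrow>\<^sub>L real).
              (\<forall>u\<in>U. (phi DJ \<epsilon> has_derivative blinfun_apply (D u)) (at u)) \<and> continuous_on U D)"
  proof -
  obtain V where V: "open V" "ubar \<in> V" and uV: "\<forall>u\<in>V. \<exists>!\<alpha>. solves_P DJ \<epsilon> u \<alpha>"
    using nbhd by blast
  obtain D2 where D2: "\<And>u. (DJ has_derivative blinfun_apply (D2 u)) (at u)" and cD2: "continuous_on UNIV D2"
    using C2 unfolding C2_with_jacobian_def by blast
  have cDJ: "continuous_on UNIV DJ"
    using D2 by (intro continuous_at_imp_continuous_on ballI has_derivative_continuous) blast
  define a where "a u = (THE \<alpha>. solves_P DJ \<epsilon> u \<alpha>)" for u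
  have asol: "solves_P DJ \<epsilon> u (a u)" if "u \<in> V" for u
    unfolding a_def using uV that by (metis theI')
  have auniq: "\<beta> = a u" if "u \<in> V" "solves_P DJ \<epsilon> u \<beta>" for u \<beta>
    using asol[OF that(1)] uV that by metis
  have phi_eq: "phi DJ \<epsilon> u = omega DJ \<epsilon> u (a u)" if "u \<in> V" for u
    unfolding phi_def
    using asol[OF that] unfolding solves_P_def by (intro cInf_eq_minimum) auto
  have phi_le: "phi DJ \<epsilon> u \<le> omega DJ \<epsilon> u \<beta>" if "u \<in> V" "\<beta> \<in> unit_simplex" for u \<beta>
    using phi_eq[OF that(1)] asol[OF that(1)] that(2) unfolding solves_P_def by auto
  have aS: "a \<in> V \<rightarrow> unit_simplex"
    using asol unfolding solves_P_def by auto
  have com: "continuous_on UNIV (\<lambda>p. omega DJ \<epsilon> (fst p) (snd p))"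
    by (rule cont_omega[OF cDJ])
  have graph: "(\<lambda>x. Pair x (a x)) ` V = V \<times> unit_simplex \<inter>
      (\<Inter>\<gamma>\<in>unit_simplex. {p. omega DJ \<epsilon> (fst p) (snd p) - omega DJ \<epsilon> (fst p) \<gamma> \<le> 0})"
  proof
    show "(\<lambda>x. Pair x (a x)) ` V \<subseteq> V \<times> unit_simplex \<inter>
      (\<Inter>\<gamma>\<in>unit_simplex. {p. omega DJ \<epsilon> (fst p) (snd p) - omega DJ \<epsilon> (fst p) \<gamma> \<le> 0})"
    proof
      fix p assume "p \<in> (\<lambda>x. Pair x (a x)) ` V"
      then obtain x where x: "x \<in> V" "p = (x, a x)" by blast
      have "a x \<in> unit_simplex" "\<forall>\<gamma>\<in>unit_simplex. omega DJ \<epsilon> x (a x) \<le> omega DJ \<epsilon> x \<gamma>"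
        using asol[OF x(1)] unfolding solves_P_def by blast+
      then show "p \<in> V \<times> unit_simplex \<inter>
        (\<Inter>\<gamma>\<in>unit_simplex. {p. omega DJ \<epsilon> (fst p) (snd p) - omega DJ \<epsilon> (fst p) \<gamma> \<le> 0})"
        using x by simp
    qed
    show "V \<times> unit_simplex \<inter>
      (\<Inter>\<gamma>\<in>unit_simplex. {p. omega DJ \<epsilon> (fst p) (snd p) - omega DJ \<epsilon> (fst p) \<gamma> \<le> 0}) \<subseteq> (\<lambda>x. Pair x (a x)) ` V"
    proof
      fix p assume p: "p \<in> V \<times> unit_simplex \<inter>
        (\<Inter>\<gamma>\<in>unit_simplex. {p. omega DJ \<epsilon> (fst p) (snd p) - omega DJ \<epsilon> (fst p) \<gamma> \<le> 0})"
      obtain x \<beta> where xb: "p = (x, \<beta>)" by fastforce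
      have x: "x \<in> V" and b: "\<beta> \<in> unit_simplex" using p xb by auto
      have "\<forall>\<gamma>\<in>unit_simplex. omega DJ \<epsilon> x \<beta> \<le> omega DJ \<epsilon> x \<gamma>"
        using p xb by simp
      then have "solves_P DJ \<epsilon> x \<beta>" using b unfolding solves_P_def by blast
      then have "\<beta> = a x" using auniq[OF x] by blast
      then show "p \<in> (\<lambda>x. Pair x (a x)) ` V" using x xb by blast
    qed
  qed
  have "closed (\<Inter>\<gamma>\<in>unit_simplex. {p. omega DJ \<epsilon> (fst p) (snd p) - omega DJ \<epsilon> (fst p) \<gamma> \<le> 0})"
  proof (intro closed_INT ballI closed_Collect_le)
    fix \<gamma> :: "real^'k"
    have c2: "continuous_on UNIV (\<lambda>p::(real^'n)\<times>(real^'k). omega DJ \<epsilon> (fst p) \<gamma>)"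
    proof -
      have "continuous_on UNIV (\<lambda>p::(real^'n)\<times>(real^'k). (fst p, \<gamma>))" by (intro continuous_intros)
      from continuous_on_compose2[OF com this] show ?thesis by simp
    qed
    show "continuous_on UNIV (\<lambda>p::(real^'n)\<times>(real^'k). omega DJ \<epsilon> (fst p) (snd p) - omega DJ \<epsilon> (fst p) \<gamma>)"
      by (intro continuous_intros com c2)
  qed (auto intro: continuous_intros)
  then have "closedin (top_of_set (V \<times> unit_simplex)) ((\<lambda>x. Pair x (a x)) ` V)"
    unfolding graph by (rule closedin_closed_Int)
  then have ca: "continuous_on V a"
    using continuous_closed_graph_eq[OF compact_simplex aS] by blast
  define D where "D u = Lb DJ D2 u (a u)" for u
  have cL: "continuous_on UNIV (\<lambda>p. Lb DJ D2 (fst p) (snd p))"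
    by (rule cont_Lb[OF cD2 cDJ])
  have cD: "continuous_on V D"
    unfolding D_def
  proof -
    have "continuous_on V (\<lambda>u. (u, a u))" by (intro continuous_intros ca)
    from continuous_on_compose2[OF cL this] show "continuous_on V (\<lambda>u. Lb DJ D2 u (a u))" by simp
  qed
  have derD: "(phi DJ \<epsilon> has_derivative blinfun_apply (D u)) (at u)" if uV': "u \<in> V" for u
    unfolding has_derivative_at_alt
  proof (intro conjI allI impI blinfun.bounded_linear_right)
    fix e :: real assume e: "e > 0"
    define L0 where "L0 = Lb DJ D2 u (a u)"
    obtain d0 where d0: "d0 > 0" "ball u d0 \<subseteq> V" using V(1) uV' open_contains_ball by blast
    obtain d1 where d1: "d1 > 0" "\<And>p. dist p (u, a u) < d1 \<Longrightarrow> dist (Lb DJ D2 (fst p) (snd p)) L0 < e"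
      using cL e unfolding continuous_on_iff L0_def by (metis UNIV_I fst_conv snd_conv)
    obtain d2 where d2: "d2 > 0" "\<And>v. v \<in> V \<Longrightarrow> dist v u < d2 \<Longrightarrow> dist (a v) (a u) < d1/2"
      using ca uV' d1(1) unfolding continuous_on_iff by (metis half_gt_zero)
    define \<delta> where "\<delta> = min d0 (min d2 (d1/2))"
    have \<delta>: "\<delta> > 0" using d0 d1 d2 by (simp add: \<delta>_def)
    have bnd: "\<bar>omega DJ \<epsilon> y \<beta> - omega DJ \<epsilon> u \<beta> - L0 (y - u)\<bar> \<le> e * norm (y - u)"
      if y: "norm (y - u) < \<delta>" and \<beta>: "dist \<beta> (a u) < d1/2" for y \<beta>
    proof -
      define f where "f x = omega DJ \<epsilon> x \<beta> - L0 x" for x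
      have df: "(f has_derivative blinfun_apply (Lb DJ D2 x \<beta> - L0)) (at x within ball u \<delta>)" for x
      proof -
        have "(f has_derivative (\<lambda>h. Lb DJ D2 x \<beta> h - L0 h)) (at x)"
          unfolding f_def by (intro has_derivative_diff deriv_omega D2 bounded_linear_imp_has_derivative blinfun.bounded_linear_right)
        moreover have "(\<lambda>h. Lb DJ D2 x \<beta> h - L0 h) = blinfun_apply (Lb DJ D2 x \<beta> - L0)"
          by (simp add: minus_blinfun.rep_eq fun_diff_def)
        ultimately show ?thesis by (metis has_derivative_at_withinI)
      qed
      have B: "onorm (blinfun_apply (Lb DJ D2 x \<beta> - L0)) \<le> e" if "x \<in> ball u \<delta>" for x
      proof -
        have "dist x u < d1/2" using that by (simp add: \<delta>_def dist_commute)
        then have "dist (x, \<beta>) (u, a u) < d1"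
        proof -
          have "dist (x, \<beta>) (u, a u) \<le> \<bar>dist x u\<bar> + \<bar>dist \<beta> (a u)\<bar>"
            unfolding dist_Pair_Pair by (rule sqrt_sum_squares_le_sum_abs)
          then show ?thesis using \<beta> \<open>dist x u < d1/2\<close> by simp
        qed
        then have "dist (Lb DJ D2 x \<beta>) L0 < e" using d1(2)[of "(x, \<beta>)"] by simp
        then show ?thesis by (simp add: norm_blinfun.rep_eq[symmetric] dist_norm)
      qed
      have "norm (f y - f u) \<le> e * norm (y - u)"
        by (rule differentiable_bound[OF convex_ball df B]) (use y \<delta> in \<open>auto simp: dist_norm norm_minus_commute\<close>)
      moreover have "f y - f u = omega DJ \<epsilon> y \<beta> - omega DJ \<epsilon> u \<beta> - L0 (y - u)"
        by (simp add: f_def blinfun.diff_right)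
      ultimately show ?thesis by simp
    qed
    show "\<exists>d>0. \<forall>y. norm (y - u) < d \<longrightarrow>
      norm (phi DJ \<epsilon> y - phi DJ \<epsilon> u - blinfun_apply (D u) (y - u)) \<le> e * norm (y - u)"
    proof (intro exI[of _ \<delta>] conjI allI impI \<delta>)
      fix y assume y: "norm (y - u) < \<delta>"
      have yV: "y \<in> V" using y d0 by (auto simp: \<delta>_def dist_norm norm_minus_commute)
      have "dist (a y) (a u) < d1/2" using d2(2)[OF yV] y by (simp add: \<delta>_def dist_norm)
      note b2 = bnd[OF y this]
      note b1 = bnd[OF y, of "a u"]
      have s1: "a u \<in> unit_simplex" "a y \<in> unit_simplex" using aS uV' yV by auto
      have "phi DJ \<epsilon> y \<le> omega DJ \<epsilon> y (a u)" by (rule phi_le[OF yV s1(1)])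
      moreover have "phi DJ \<epsilon> u \<le> omega DJ \<epsilon> u (a y)" by (rule phi_le[OF uV' s1(2)])
      moreover note phi_eq[OF yV] phi_eq[OF uV']
      ultimately show "norm (phi DJ \<epsilon> y - phi DJ \<epsilon> u - blinfun_apply (D u) (y - u)) \<le> e * norm (y - u)"
        using b1 b2 d1(1) unfolding D_def L0_def[symmetric] by (simp add: abs_le_iff)
    qed
  qed
  show ?thesis
    by (intro exI[of _ V] exI[of _ D] conjI V cD ballI derD)
qed

end
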